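(* Let $\mu$ be a probability measure on $\mathbb{C}$ with compact support, and let $X_1, \ldots, X_n$ be iid random variables with distribution $\mu$. Then for every $\varepsilon > 0$ there exist constants $C, c > 0$ (depending only on $\mu$ and $\varepsilon$) such that, for every $n\ge 1$, with probability at least $1 - C e^{-cn}$ the polynomial $p_n(z) := \prod_{j=1}^n (z - X_j)$ has no critical points outside $N_\mu(\varepsilon)$.
   Context: For a probability measure $\mu$ on $\mathbb{C}$, the Cauchy–Stieltjes transform is $m_\mu(z) := \int_{\mathbb{C}} \frac{d\mu(x)}{z-x}$ for $z \notin \operatorname{supp}(\mu)$. Let $M_\mu := \{ z \in \mathbb{C}\setminus \operatorname{supp}(\mu) : m_\mu(z) = 0\}$, and for $\varepsilon>0$ let $N_\mu(\varepsilon) := \{ z \in \mathbb{C} : \operatorname{dist}(z, \operatorname{supp}(\mu) \cup M_\mu) < \varepsilon\}$, where $\operatorname{dist}(z,D)=\inf_{w\in D}|z-w|$. A critical point of a polynomial is a zero of its derivative. *)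

theory Defs
  imports "HOL-Probability.Probability" "HOL-Computational_Algebra.Polynomial"
begin

definition msupp :: "complex measure \<Rightarrow> complex set" where
  "msupp \<mu> = {x. \<forall>e>0. emeasure \<mu> (ball x e) > 0}"

definition cauchy_transform :: "complex measure \<Rightarrow> complex \<Rightarrow> complex" where
  "cauchy_transform \<mu> z = integral\<^sup>L \<mu> (\<lambda>x. 1 / (z - x))"

definition zeros_CT :: "complex measure \<Rightarrow> complex set" where
  "zeros_CT \<mu> = {z. z \<notin> msupp \<mu> \<and> cauchy_transform \<mu> z = 0}"

definition nbhd_N :: "complex measure \<Rightarrow> real \<Rightarrow> complex set" where
  "nbhd_N \<mu> e = {z. infdist z (msupp \<mu> \<union> zeros_CT \<mu>) < e}"

definition rand_poly :: "nat \<Rightarrow> (nat \<Rightarrow> complex) \<Rightarrow> complex poly" where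
  "rand_poly n x = (\<Prod>j<n. [:- x j, 1:])"

end

theory Submission
  imports Defs
begin


lemma msupp_null:
  fixes \<mu> :: "complex measure"
  assumes "sets \<mu> = sets borel"
  shows "UNIV - msupp \<mu> \<in> null_sets \<mu>"
proof -
  define F where "F = {ball x e | x e. e > 0 \<and> emeasure \<mu> (ball x e) = 0}"
  have op: "\<And>S. S \<in> F \<Longrightarrow> open S" by (auto simp: F_def)
  obtain F' where F': "F' \<subseteq> F" "countable F'" "\<Union>F' = \<Union>F"
    using Lindelof[OF op] by metis
  have eq: "\<Union>F = UNIV - msupp \<mu>"
  proof
    show "\<Union>F \<subseteq> UNIV - msupp \<mu>"
    proof
      fix y assume "y \<in> \<Union>F"
      then obtain x e where xe: "e > 0" "emeasure \<mu> (ball x e) = 0" "y \<in> ball x e"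
        by (auto simp: F_def)
      define d where "d = e - dist x y"
      have d: "d > 0" using xe by (simp add: d_def dist_commute)
      have "ball y d \<subseteq> ball x e"
      proof
        fix u assume "u \<in> ball y d"
        hence "dist y u < d" by simp
        moreover have "dist x u \<le> dist x y + dist y u" by (rule dist_triangle)
        ultimately show "u \<in> ball x e" by (simp add: d_def)
      qed
      hence "emeasure \<mu> (ball y d) \<le> emeasure \<mu> (ball x e)"
        by (intro emeasure_mono) (auto simp: assms)
      hence "emeasure \<mu> (ball y d) = 0" using xe by simp
      thus "y \<in> UNIV - msupp \<mu>" using d by (auto simp: msupp_def)
    qed
  next
    show "UNIV - msupp \<mu> \<subseteq> \<Union>F"
    proof
      fix y assume "y \<in> UNIV - msupp \<mu>"
      then obtain e where "e > 0" "\<not> emeasure \<mu> (ball y e) > 0" by (auto simp: msupp_def)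
      thus "y \<in> \<Union>F" unfolding F_def by (auto intro!: exI[of _ "ball y e"])
    qed
  qed
  have nF: "F' \<subseteq> null_sets \<mu>"
    using F'(1) by (auto simp: F_def null_sets_def assms)
  have "(\<Union>i\<in>F'. i) \<in> null_sets \<mu>"
    by (rule null_sets_UN') (use F'(2) nF in auto)
  hence "\<Union>F' \<in> null_sets \<mu>" by simp
  thus ?thesis using F' eq by simp
qed

lemma msupp_AE:
  fixes \<mu> :: "complex measure"
  assumes "sets \<mu> = sets borel"
  shows "AE x in \<mu>. x \<in> msupp \<mu>"
  using msupp_null[OF assms] by (auto intro!: AE_I' )

lemma msupp_nonempty:
  fixes \<mu> :: "complex measure"
  assumes "prob_space \<mu>" "sets \<mu> = sets borel"
  shows "msupp \<mu> \<noteq> {}"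
proof
  assume "msupp \<mu> = {}"
  with msupp_null[OF assms(2)] have "emeasure \<mu> UNIV = 0" by (auto simp: null_sets_def)
  moreover have "space \<mu> = UNIV" using sets_eq_imp_space_eq[OF assms(2)] by simp
  ultimately show False using prob_space.emeasure_space_1[OF assms(1)] by simp
qed

lemma pderiv_rand_poly:
  assumes "\<And>j. j < n \<Longrightarrow> z \<noteq> x j"
  shows "poly (pderiv (rand_poly n x)) z = poly (rand_poly n x) z * (\<Sum>j<n. 1 / (z - x j))"
  using assms
proof (induction n)
  case 0
  then show ?case by (simp add: rand_poly_def)
next
  case (Suc n)
  have ne: "z - x n \<noteq> 0" using Suc.prems by auto
  have IH: "poly (pderiv (rand_poly n x)) z = poly (rand_poly n x) z * (\<Sum>j<n. 1 / (z - x j))"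
    using Suc by auto
  have r: "rand_poly (Suc n) x = rand_poly n x * [:- x n, 1:]" by (simp add: rand_poly_def)
  have d: "pderiv [:- x n, 1:] = 1" by (simp add: pderiv_pCons)
  have h: "poly (pderiv (rand_poly (Suc n) x)) z = poly (rand_poly n x) z + poly (pderiv (rand_poly n x)) z * (z - x n)"
    unfolding r pderiv_mult d by (simp add: algebra_simps)
  have p: "poly (rand_poly (Suc n) x) z = poly (rand_poly n x) z * (z - x n)" by (simp add: rand_poly_def algebra_simps)
  show ?case using ne unfolding h p IH by (simp add: field_simps)
qed

lemma re_pos:
  fixes z x :: complex
  assumes "cmod x < cmod z"
  shows "Re (z / (z - x)) > 0"
proof -
  have z0: "z \<noteq> 0" using assms by auto
  define w where "w = x / z"
  have w: "cmod w < 1" using assms z0 by (simp add: w_def norm_divide divide_simps)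
  have "z / (z - x) = 1 / (1 - w)" using z0 by (simp add: w_def field_simps)
  moreover have "Re (1 / (1 - w)) = (1 - Re w) / ((Re (1 - w))^2 + (Im (1-w))^2)"
    by (simp add: Re_divide)
  moreover have "Re w < 1" using w abs_Re_le_cmod[of w] by linarith
  moreover have "w \<noteq> 1" using w by auto
  moreover have "(Re (1 - w))^2 > 0" using \<open>Re w < 1\<close> by simp
  ultimately show ?thesis by (auto intro!: divide_pos_pos add_pos_nonneg)
qed



lemma indep_coords:
  fixes \<mu> :: "'a measure"
  assumes "prob_space \<mu>" "I \<noteq> {}"
  shows "prob_space.indep_vars (PiM I (\<lambda>_. \<mu>)) (\<lambda>_. \<mu>) (\<lambda>i x. x i) I"
proof -
  note False = assms(2)
  interpret P: prob_space "PiM I (\<lambda>_. \<mu>)" by (intro prob_space_PiM assms)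
  have "distr (PiM I (\<lambda>_. \<mu>)) (PiM I (\<lambda>_. \<mu>)) (\<lambda>x. \<lambda>i\<in>I. x i) = distr (PiM I (\<lambda>_. \<mu>)) (PiM I (\<lambda>_. \<mu>)) (\<lambda>x. x)"
    by (intro distr_cong) (auto simp: space_PiM PiE_def extensional_def restrict_def)
  also have "\<dots> = PiM I (\<lambda>_. \<mu>)" by simp
  also have "\<dots> = PiM I (\<lambda>i. distr (PiM I (\<lambda>_. \<mu>)) \<mu> (\<lambda>x. x i))"
  proof (intro PiM_cong refl)
    fix i assume "i \<in> I"
    thus "\<mu> = distr (PiM I (\<lambda>_. \<mu>)) \<mu> (\<lambda>x. x i)"
      using distr_PiM_component[of I "\<lambda>_. \<mu>" i] assms(1) by simp
  qed
  finally show ?thesis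
    by (subst P.indep_vars_iff_distr_eq_PiM'[OF False]) auto
qed

lemma hoeff:
  fixes \<mu> :: "complex measure" and f :: "complex \<Rightarrow> real" and n :: nat
  assumes pr: "prob_space \<mu>" and se: "sets \<mu> = sets borel" and fm: "f \<in> borel_measurable borel"
    and ae: "AE x in \<mu>. f x \<in> {a..b}" and ab: "a < b" and n: "n \<ge> 1" and t: "t \<ge> 0"
  shows "measure (PiM {..<n} (\<lambda>_. \<mu>)) {x \<in> space (PiM {..<n} (\<lambda>_. \<mu>)).
            \<bar>(\<Sum>j<n. f (x j)) / real n - integral\<^sup>L \<mu> f\<bar> \<ge> t} \<le> 2 * exp (-2 * real n * t\<^sup>2 / (b-a)\<^sup>2)"
proof -
  have n0: "0 < n" using n by simp
  define P where "P = PiM {..<n} (\<lambda>_. \<mu>)"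
  interpret P: prob_space P unfolding P_def by (intro prob_space_PiM pr)
  have fm': "f \<in> borel_measurable \<mu>" using fm by (subst measurable_cong_sets[OF se refl])
  have comp: "\<And>i. i < n \<Longrightarrow> (\<lambda>x. x i) \<in> measurable P \<mu>"
    unfolding P_def by simp
  have dc: "\<And>i. i < n \<Longrightarrow> distr P \<mu> (\<lambda>x. x i) = \<mu>"
    unfolding P_def by (rule distr_PiM_component) (auto simp: pr)
  have dist: "\<And>i. i < n \<Longrightarrow> distr P borel (\<lambda>x. f (x i)) = distr \<mu> borel f"
  proof -
    fix i assume i: "i < n"
    have "distr P borel (\<lambda>x. f (x i)) = distr (distr P \<mu> (\<lambda>x. x i)) borel f"
      using comp[OF i] fm' by (subst distr_distr) (auto simp: o_def)
    thus "distr P borel (\<lambda>x. f (x i)) = distr \<mu> borel f" using dc[OF i] by simp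
  qed
  interpret H: Hoeffding_ineq_iid P "{..<n}" "\<lambda>i x. f (x i)" "\<lambda>x. f (x 0)" a b "integral\<^sup>L \<mu> f"
  proof unfold_locales
    show "P.indep_vars (\<lambda>_. borel) (\<lambda>i x. f (x i)) {..<n}"
    proof -
      have ic: "P.indep_vars (\<lambda>_. \<mu>) (\<lambda>i x. x i) {..<n}"
        using indep_coords[OF pr, of "{..<n}"] n0 unfolding P_def by auto
      show ?thesis using P.indep_vars_compose2[OF ic, of "\<lambda>i. f" "\<lambda>_. borel"] fm' by auto
    qed
    show "\<And>i. i \<in> {..<n} \<Longrightarrow> distr P borel (\<lambda>x. f (x i)) = distr P borel (\<lambda>x. f (x 0))"
      using dist n0 by auto
    show "(\<lambda>x. f (x 0)) \<in> borel_measurable P"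
      using measurable_compose[OF comp[OF n0] fm'] by simp
    show "AE x in P. f (x 0) \<in> {a..b}"
      unfolding P_def by (rule AE_PiM_component[where P="\<lambda>x. f x \<in> {a..b}"]) (use pr ae n0 in auto)
    have "integral\<^sup>L P (\<lambda>x. f (x 0)) = integral\<^sup>L (distr P \<mu> (\<lambda>x. x 0)) f"
      using comp[OF n0] fm' by (subst integral_distr) auto
    thus "integral\<^sup>L \<mu> f \<equiv> integral\<^sup>L P (\<lambda>x. f (x 0))" using dc[OF n0] by simp
  next
    show "finite {..<n}" by (rule finite_lessThan)
  qed
  have "P.prob {x\<in>space P. \<bar>(\<Sum>i\<in>{..<n}. f (x i)) / real (card {..<n}) - integral\<^sup>L \<mu> f\<bar> \<ge> t}
     \<le> 2 * exp (-2 * real (card {..<n}) * t\<^sup>2 / (b - a)\<^sup>2)"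
    by (rule H.Hoeffding_ineq_abs_ge') (use t ab n0 in auto)
  thus ?thesis unfolding P_def by simp
qed



lemma pt_bound:
  fixes z y x :: complex
  assumes "e > 0" "e \<le> dist z x" "e \<le> dist y x"
  shows "norm (1/(z-x) - 1/(y-x)) \<le> dist z y / e\<^sup>2"
proof -
  have a: "z - x \<noteq> 0" "y - x \<noteq> 0" using assms by (auto simp: dist_norm)
  have "1/(z-x) - 1/(y-x) = (y - z) / ((z-x)*(y-x))" using a by (simp add: field_simps)
  hence "norm (1/(z-x) - 1/(y-x)) = dist z y / (norm (z-x) * norm (y-x))"
    by (simp add: norm_divide norm_mult dist_norm norm_minus_commute)
  also have "\<dots> \<le> dist z y / (e * e)"
    using assms by (intro divide_left_mono mult_mono) (auto simp: dist_norm intro!: mult_pos_pos)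
  finally show ?thesis by (simp add: power2_eq_square)
qed

lemma ct_facts:
  fixes \<mu> :: "complex measure"
  assumes pr: "prob_space \<mu>" and se: "sets \<mu> = sets borel" and e: "e > 0"
    and ez: "e \<le> infdist z (msupp \<mu>)"
  defines "h \<equiv> (\<lambda>x. if x \<in> msupp \<mu> then 1/(z-x) else 0)"
  shows "h \<in> borel_measurable \<mu>" "\<And>x. norm (h x) \<le> 1/e" "integrable \<mu> h"
    "cauchy_transform \<mu> z = integral\<^sup>L \<mu> h"
proof -
  interpret prob_space \<mu> by (rule pr)
  have cl: "closed (msupp \<mu>)"
  proof -
    have "open (UNIV - msupp \<mu>)"
    proof (rule openI)
      fix y assume "y \<in> UNIV - msupp \<mu>"
      then obtain r where r: "r > 0" "\<not> emeasure \<mu> (ball y r) > 0" by (auto simp: msupp_def)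
      have "ball y r \<subseteq> UNIV - msupp \<mu>"
      proof
        fix u assume u: "u \<in> ball y r"
        define d where "d = r - dist y u"
        have d: "d > 0" using u by (simp add: d_def)
        have "ball u d \<subseteq> ball y r"
        proof
          fix v assume "v \<in> ball u d"
          hence "dist u v < d" by simp
          moreover have "dist y v \<le> dist y u + dist u v" by (rule dist_triangle)
          ultimately show "v \<in> ball y r" by (simp add: d_def)
        qed
        hence "emeasure \<mu> (ball u d) \<le> emeasure \<mu> (ball y r)"
          by (intro emeasure_mono) (auto simp: se)
        thus "u \<in> UNIV - msupp \<mu>" using r d by (auto simp: msupp_def)
      qed
      thus "\<exists>r>0. ball y r \<subseteq> UNIV - msupp \<mu>" using r by blast
    qed
    thus ?thesis by (simp add: closed_def Compl_eq_Diff_UNIV)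
  qed
  have mS: "msupp \<mu> \<in> sets \<mu>" using cl se by simp
  have m1: "(\<lambda>x. 1/(z-x)) \<in> borel_measurable \<mu>"
    by (subst measurable_cong_sets[OF se refl]) measurable
  show hm: "h \<in> borel_measurable \<mu>"
    unfolding h_def using mS m1 by measurable
  show hb: "\<And>x. norm (h x) \<le> 1/e"
  proof -
    fix x show "norm (h x) \<le> 1/e"
    proof (cases "x \<in> msupp \<mu>")
      case True
      hence "e \<le> dist z x" using ez infdist_le[OF True, of z] by linarith
      hence "1 / dist z x \<le> 1/e" using e by (intro divide_left_mono) (auto intro!: mult_pos_pos)
      thus ?thesis using True by (simp add: h_def norm_divide dist_norm)
    next
      case False thus ?thesis using e by (simp add: h_def)
    qed
  qed
  show "integrable \<mu> h"
    by (rule integrable_const_bound[where B="1/e"]) (use hb hm in auto)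
  show "cauchy_transform \<mu> z = integral\<^sup>L \<mu> h"
    unfolding cauchy_transform_def
    by (rule integral_cong_AE[OF m1 hm]) (use msupp_AE[OF se] in \<open>auto simp: h_def\<close>)
qed

lemma ct_lip:
  fixes \<mu> :: "complex measure"
  assumes pr: "prob_space \<mu>" and se: "sets \<mu> = sets borel" and e: "e > 0"
    and ez: "e \<le> infdist z (msupp \<mu>)" and ey: "e \<le> infdist y (msupp \<mu>)"
  shows "norm (cauchy_transform \<mu> z - cauchy_transform \<mu> y) \<le> dist z y / e\<^sup>2"
proof -
  interpret prob_space \<mu> by (rule pr)
  define hz where "hz = (\<lambda>x. if x \<in> msupp \<mu> then 1/(z-x) else 0)"
  define hy where "hy = (\<lambda>x. if x \<in> msupp \<mu> then 1/(y-x) else 0)"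
  note fz = ct_facts[OF pr se e ez, folded hz_def]
  note fy = ct_facts[OF pr se e ey, folded hy_def]
  have "cauchy_transform \<mu> z - cauchy_transform \<mu> y = integral\<^sup>L \<mu> (\<lambda>x. hz x - hy x)"
    using fz fy by simp
  also have "norm \<dots> \<le> integral\<^sup>L \<mu> (\<lambda>x. norm (hz x - hy x))" by (rule integral_norm_bound)
  also have "\<dots> \<le> dist z y / e\<^sup>2"
  proof (rule integral_le_const)
    show "integrable \<mu> (\<lambda>x. norm (hz x - hy x))" using fz fy by auto
    show "AE x in \<mu>. norm (hz x - hy x) \<le> dist z y / e\<^sup>2"
    proof (rule AE_I2)
      fix x show "norm (hz x - hy x) \<le> dist z y / e\<^sup>2"
      proof (cases "x \<in> msupp \<mu>")
        case True
        have "e \<le> dist z x" "e \<le> dist y x" using ez ey infdist_le[OF True, of z] infdist_le[OF True, of y] by linarith+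
        thus ?thesis using True pt_bound[OF e] by (simp add: hz_def hy_def)
      next
        case False thus ?thesis by (simp add: hz_def hy_def)
      qed
    qed
  qed
  finally show ?thesis .
qed



lemma tri3: "norm (a + b + c) \<le> norm a + norm b + norm (c::'a::real_normed_vector)"
  by (meson add_right_mono norm_triangle_ineq order_trans)

theorem mainTheorem2:
  fixes \<mu> :: "complex measure"
  assumes "prob_space \<mu>" and "sets \<mu> = sets borel" and "compact (msupp \<mu>)"
  shows "\<forall>\<epsilon>>0. \<exists>C>0. \<exists>c>0. \<forall>n\<ge>1.
     \<exists>A \<in> sets (PiM {..<n} (\<lambda>_. \<mu>)).
        A \<subseteq> {x. \<forall>z. poly (pderiv (rand_poly n x)) z = 0 \<longrightarrow> z \<in> nbhd_N \<mu> \<epsilon>} \<and>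
        measure (PiM {..<n} (\<lambda>_. \<mu>)) A \<ge> 1 - C * exp (- c * real n)"
proof (intro allI impI)
  fix \<epsilon> :: real assume \<epsilon>: "\<epsilon> > 0"
  note pr = assms(1) and se = assms(2) and cpt = assms(3)
  interpret prob_space \<mu> by (rule pr)
  define S where "S = msupp \<mu>"
  have Sne: "S \<noteq> {}" unfolding S_def by (rule msupp_nonempty[OF pr se])
  have cl: "closed S" unfolding S_def using cpt by (rule compact_imp_closed)
  obtain B where B: "B > 0" "\<forall>x\<in>S. norm x \<le> B"
    using compact_imp_bounded[OF cpt] bounded_pos unfolding S_def by metis
  define R where "R = B + 1"
  define T where "T = S \<union> zeros_CT \<mu>"
  define K where "K = cball 0 R \<inter> {z. \<epsilon> \<le> infdist z T}"
  have Kc: "compact K"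
  proof -
    have "closed {z. \<epsilon> \<le> infdist z T}"
      by (rule closed_Collect_le) (auto intro!: continuous_intros)
    thus ?thesis unfolding K_def by (intro compact_Int_closed compact_cball)
  qed
  have KS: "\<And>z. z \<in> K \<Longrightarrow> \<epsilon> \<le> infdist z S"
  proof -
    fix z assume "z \<in> K"
    hence "\<epsilon> \<le> infdist z T" by (simp add: K_def)
    moreover have "infdist z T \<le> infdist z S" by (rule infdist_mono) (use Sne in \<open>auto simp: T_def\<close>)
    ultimately show "\<epsilon> \<le> infdist z S" by linarith
  qed
  have KS': "\<And>z. z \<in> K \<Longrightarrow> \<epsilon> \<le> infdist z (msupp \<mu>)" using KS unfolding S_def .
  have Kct: "\<And>z. z \<in> K \<Longrightarrow> cauchy_transform \<mu> z \<noteq> 0"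
  proof
    fix z assume z: "z \<in> K" and c0: "cauchy_transform \<mu> z = 0"
    have e: "\<epsilon> \<le> infdist z T" using z by (simp add: K_def)
    have "z \<notin> S"
    proof
      assume "z \<in> S" hence "infdist z T = 0" by (simp add: T_def)
      thus False using e \<epsilon> by simp
    qed
    hence "z \<in> T" using c0 by (simp add: T_def zeros_CT_def S_def)
    hence "infdist z T = 0" by simp
    thus False using e \<epsilon> by simp
  qed
  have cont: "continuous_on K (cauchy_transform \<mu>)"
  proof (rule lipschitz_on_continuous_on)
    show "(1/\<epsilon>\<^sup>2)-lipschitz_on K (cauchy_transform \<mu>)"
    proof (rule lipschitz_onI)
      fix z y assume "z \<in> K" "y \<in> K"
      thus "dist (cauchy_transform \<mu> z) (cauchy_transform \<mu> y) \<le> 1 / \<epsilon>\<^sup>2 * dist z y"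
        using ct_lip[OF pr se \<epsilon> KS' KS'] by (simp add: dist_norm)
    qed simp
  qed
  obtain \<delta> where \<delta>: "\<delta> > 0" "\<And>z. z \<in> K \<Longrightarrow> \<delta> \<le> norm (cauchy_transform \<mu> z)"
  proof (cases "K = {}")
    case True thus ?thesis using that[of 1] by auto
  next
    case False
    obtain z0 where z0: "z0 \<in> K" "\<And>z. z \<in> K \<Longrightarrow> norm (cauchy_transform \<mu> z0) \<le> norm (cauchy_transform \<mu> z)"
      using continuous_attains_inf[OF Kc False continuous_on_norm[OF cont]] by auto
    show ?thesis using that[of "norm (cauchy_transform \<mu> z0)"] z0 Kct[OF z0(1)] by auto
  qed
  define \<eta> where "\<eta> = \<delta> * \<epsilon>\<^sup>2 / 4"
  have \<eta>: "\<eta> > 0" using \<delta> \<epsilon> by (simp add: \<eta>_def)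
  obtain F where F: "F \<subseteq> K" "finite F" "K \<subseteq> (\<Union>y\<in>F. ball y \<eta>)"
    using compactE_image[OF Kc, of K "\<lambda>y. ball y \<eta>"] \<eta> by force
  define h where "h y x = (if x \<in> msupp \<mu> then 1/(y-x) else 0)" for y x :: complex
  define fR where "fR y x = Re (h y x)" for y x
  define fI where "fI y x = Im (h y x)" for y x
  have hF: "\<And>y. y \<in> F \<Longrightarrow> h y \<in> borel_measurable \<mu> \<and> (\<forall>x. norm (h y x) \<le> 1/\<epsilon>) \<and> integrable \<mu> (h y)
      \<and> cauchy_transform \<mu> y = integral\<^sup>L \<mu> (h y)"
  proof -
    fix y assume "y \<in> F"
    hence e: "\<epsilon> \<le> infdist y (msupp \<mu>)" using F KS' by auto
    show "?thesis y" using ct_facts[OF pr se \<epsilon> e] unfolding h_def by auto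
  qed
  define t where "t = \<delta> / 8"
  define c where "c = 2 * t\<^sup>2 / (1/\<epsilon> - (-1/\<epsilon>))\<^sup>2"
  define C where "C = 4 * real (card F) + 1"
  have c: "c > 0" using \<delta> \<epsilon> by (simp add: c_def t_def)
  have C: "C > 0" by (simp add: C_def)
  have main: "\<forall>n\<ge>1.
     \<exists>A \<in> sets (PiM {..<n} (\<lambda>_. \<mu>)).
        A \<subseteq> {x. \<forall>z. poly (pderiv (rand_poly n x)) z = 0 \<longrightarrow> z \<in> nbhd_N \<mu> \<epsilon>} \<and>
        measure (PiM {..<n} (\<lambda>_. \<mu>)) A \<ge> 1 - C * exp (- c * real n)"
  proof (intro allI impI)
    fix n :: nat assume n: "n \<ge> 1"
    define P where "P = PiM {..<n} (\<lambda>_. \<mu>)"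
    interpret P: prob_space P unfolding P_def by (intro prob_space_PiM pr)
    define B0 where "B0 = (\<Union>j<n. {x\<in>space P. x j \<notin> S})"
    define BR where "BR y = {x\<in>space P. t \<le> \<bar>(\<Sum>j<n. fR y (x j)) / real n - integral\<^sup>L \<mu> (fR y)\<bar>}" for y
    define BI where "BI y = {x\<in>space P. t \<le> \<bar>(\<Sum>j<n. fI y (x j)) / real n - integral\<^sup>L \<mu> (fI y)\<bar>}" for y
    define A where "A = space P - (B0 \<union> (\<Union>y\<in>F. BR y) \<union> (\<Union>y\<in>F. BI y))"
    show "\<exists>A \<in> sets (PiM {..<n} (\<lambda>_. \<mu>)).
        A \<subseteq> {x. \<forall>z. poly (pderiv (rand_poly n x)) z = 0 \<longrightarrow> z \<in> nbhd_N \<mu> \<epsilon>} \<and>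
        measure (PiM {..<n} (\<lambda>_. \<mu>)) A \<ge> 1 - C * exp (- c * real n)"
    proof (rule bexI[of _ A], intro conjI)
      have n0: "0 < n" using n by simp
      have comp: "\<And>j. j < n \<Longrightarrow> (\<lambda>x. x j) \<in> measurable P \<mu>" unfolding P_def by simp
      have mS: "UNIV - S \<in> sets \<mu>" using cl se by auto
      have B0j: "\<And>j. j < n \<Longrightarrow> {x\<in>space P. x j \<notin> S} \<in> sets P"
      proof -
        fix j assume j: "j < n"
        have "{x\<in>space P. x j \<notin> S} = (\<lambda>x. x j) -` (UNIV - S) \<inter> space P" by auto
        thus "{x\<in>space P. x j \<notin> S} \<in> sets P" using measurable_sets[OF comp[OF j] mS] by simp
      qed
      have B0m: "B0 \<in> sets P" unfolding B0_def using B0j by auto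
      have B0n: "P.prob B0 = 0"
      proof -
        have "P.prob B0 \<le> (\<Sum>j<n. P.prob {x\<in>space P. x j \<notin> S})"
          unfolding B0_def by (rule measure_UNION_le) (use B0j in auto)
        also have "\<dots> = 0"
        proof (rule sum.neutral, intro ballI)
          fix j assume "j \<in> {..<n}"
          hence j: "j < n" by simp
          have ae: "AE x in P. x j \<in> S"
            unfolding P_def S_def
            by (rule AE_PiM_component[where P="\<lambda>x. x \<in> msupp \<mu>"]) (use pr msupp_AE[OF se] j in auto)
          have "emeasure P {x\<in>space P. x j \<notin> S} = 0"
            using AE_iff_measurable[OF B0j[OF j] refl] ae by simp
          thus "P.prob {x\<in>space P. x j \<notin> S} = 0" by (simp add: P.emeasure_eq_measure)
        qed
        finally show ?thesis using measure_nonneg[of P B0] by linarith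
      qed
      have fRm: "\<And>y. y \<in> F \<Longrightarrow> fR y \<in> borel_measurable borel"
      proof -
        fix y assume "y \<in> F"
        hence "h y \<in> borel_measurable \<mu>" using hF by blast
        hence "(\<lambda>x. Re (h y x)) \<in> borel_measurable \<mu>" by measurable
        thus "fR y \<in> borel_measurable borel" unfolding fR_def using measurable_cong_sets[OF se refl] by metis
      qed
      have fIm: "\<And>y. y \<in> F \<Longrightarrow> fI y \<in> borel_measurable borel"
      proof -
        fix y assume "y \<in> F"
        hence "h y \<in> borel_measurable \<mu>" using hF by blast
        hence "(\<lambda>x. Im (h y x)) \<in> borel_measurable \<mu>" by measurable
        thus "fI y \<in> borel_measurable borel" unfolding fI_def using measurable_cong_sets[OF se refl] by metis
      qed
      have summ: "\<And>g. g \<in> borel_measurable borel \<Longrightarrow> (\<lambda>x. \<bar>(\<Sum>j<n. g (x j)) / real n - integral\<^sup>L \<mu> g\<bar>) \<in> borel_measurable P"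
      proof -
        fix g :: "complex \<Rightarrow> real" assume g: "g \<in> borel_measurable borel"
        have g': "g \<in> borel_measurable \<mu>" using g measurable_cong_sets[OF se refl] by metis
        have "\<And>j. j \<in> {..<n} \<Longrightarrow> (\<lambda>x. g (x j)) \<in> borel_measurable P"
          using measurable_compose[OF comp g'] by auto
        hence "(\<lambda>x. \<Sum>j<n. g (x j)) \<in> borel_measurable P" by (rule borel_measurable_sum)
        thus "(\<lambda>x. \<bar>(\<Sum>j<n. g (x j)) / real n - integral\<^sup>L \<mu> g\<bar>) \<in> borel_measurable P" by measurable
      qed
      have BRm: "\<And>y. y \<in> F \<Longrightarrow> BR y \<in> sets P"
      proof -
        fix y assume "y \<in> F"
        note m = summ[OF fRm[OF this]]
        show "BR y \<in> sets P" unfolding BR_def using m by measurable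
      qed
      have BIm: "\<And>y. y \<in> F \<Longrightarrow> BI y \<in> sets P"
      proof -
        fix y assume "y \<in> F"
        note m = summ[OF fIm[OF this]]
        show "BI y \<in> sets P" unfolding BI_def using m by measurable
      qed
      have Am: "A \<in> sets P" unfolding A_def by (intro sets.Diff sets.Un sets.finite_UN sets.top B0m BRm BIm F(2))
      thus "A \<in> sets (PiM {..<n} (\<lambda>_. \<mu>))" unfolding P_def .
      define E where "E = exp (- c * real n)"
      have hoe: "\<And>g. g \<in> borel_measurable borel \<Longrightarrow> AE x in \<mu>. g x \<in> {-1/\<epsilon>..1/\<epsilon>} \<Longrightarrow>
          P.prob {x\<in>space P. t \<le> \<bar>(\<Sum>j<n. g (x j)) / real n - integral\<^sup>L \<mu> g\<bar>} \<le> 2 * E"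
      proof -
        fix g :: "complex \<Rightarrow> real" assume g: "g \<in> borel_measurable borel" "AE x in \<mu>. g x \<in> {-1/\<epsilon>..1/\<epsilon>}"
        have t0: "t \<ge> 0" using \<delta> by (simp add: t_def)
        have ab: "-1/\<epsilon> < 1/\<epsilon>" using \<epsilon> by (simp add: field_simps)
        have eq: "-2 * real n * t\<^sup>2 / (1/\<epsilon> - -1/\<epsilon>)\<^sup>2 = - c * real n"
          by (simp add: c_def field_simps)
        show "P.prob {x\<in>space P. t \<le> \<bar>(\<Sum>j<n. g (x j)) / real n - integral\<^sup>L \<mu> g\<bar>} \<le> 2 * E"
          using hoeff[OF pr se g(1) g(2) ab n t0] unfolding P_def E_def eq by simp
      qed
      have BRb: "\<And>y. y \<in> F \<Longrightarrow> P.prob (BR y) \<le> 2 * E"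
      proof -
        fix y assume y: "y \<in> F"
        have "AE x in \<mu>. fR y x \<in> {-1/\<epsilon>..1/\<epsilon>}"
        proof (rule AE_I2)
          fix x have "norm (h y x) \<le> 1/\<epsilon>" using hF[OF y] by blast
          thus "fR y x \<in> {-1/\<epsilon>..1/\<epsilon>}" using abs_Re_le_cmod[of "h y x"] by (auto simp: fR_def abs_le_iff)
        qed
        thus "P.prob (BR y) \<le> 2 * E" unfolding BR_def by (rule hoe[OF fRm[OF y]])
      qed
      have BIb: "\<And>y. y \<in> F \<Longrightarrow> P.prob (BI y) \<le> 2 * E"
      proof -
        fix y assume y: "y \<in> F"
        have "AE x in \<mu>. fI y x \<in> {-1/\<epsilon>..1/\<epsilon>}"
        proof (rule AE_I2)
          fix x have "norm (h y x) \<le> 1/\<epsilon>" using hF[OF y] by blast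
          thus "fI y x \<in> {-1/\<epsilon>..1/\<epsilon>}" using abs_Im_le_cmod[of "h y x"] by (auto simp: fI_def abs_le_iff)
        qed
        thus "P.prob (BI y) \<le> 2 * E" unfolding BI_def by (rule hoe[OF fIm[OF y]])
      qed
      have "P.prob (space P - A) = P.prob (B0 \<union> (\<Union>y\<in>F. BR y) \<union> (\<Union>y\<in>F. BI y))"
      proof -
        have "space P - A = B0 \<union> (\<Union>y\<in>F. BR y) \<union> (\<Union>y\<in>F. BI y)"
          unfolding A_def B0_def BR_def BI_def by auto
        thus ?thesis by simp
      qed
      also have "\<dots> \<le> P.prob (B0 \<union> (\<Union>y\<in>F. BR y)) + P.prob (\<Union>y\<in>F. BI y)"
        by (rule measure_Un_le) (use B0m BRm BIm F(2) in auto)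
      also have "\<dots> \<le> (P.prob B0 + P.prob (\<Union>y\<in>F. BR y)) + P.prob (\<Union>y\<in>F. BI y)"
        by (intro add_mono measure_Un_le order.refl) (use B0m BRm BIm F(2) in auto)
      also have "P.prob (\<Union>y\<in>F. BR y) \<le> (\<Sum>y\<in>F. P.prob (BR y))"
        by (rule measure_UNION_le) (use BRm F(2) in auto)
      also have "P.prob (\<Union>y\<in>F. BI y) \<le> (\<Sum>y\<in>F. P.prob (BI y))"
        by (rule measure_UNION_le) (use BIm F(2) in auto)
      also have "(\<Sum>y\<in>F. P.prob (BR y)) \<le> (\<Sum>y\<in>F. 2 * E)" by (rule sum_mono) (rule BRb)
      also have "(\<Sum>y\<in>F. P.prob (BI y)) \<le> (\<Sum>y\<in>F. 2 * E)" by (rule sum_mono) (rule BIb)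
      finally have comp_le: "P.prob (space P - A) \<le> 4 * real (card F) * E" using B0n by (simp add: mult_ac)
      have "P.prob A = 1 - P.prob (space P - A)" using P.prob_compl[OF Am] by simp
      moreover have "E > 0" by (simp add: E_def)
      ultimately have "1 - C * E \<le> P.prob A" using comp_le by (simp add: C_def algebra_simps)
      thus "1 - C * exp (- c * real n) \<le> measure (PiM {..<n} (\<lambda>_. \<mu>)) A" unfolding P_def E_def .
    next
      show "A \<subseteq> {x. \<forall>z. poly (pderiv (rand_poly n x)) z = 0 \<longrightarrow> z \<in> nbhd_N \<mu> \<epsilon>}"
      proof (intro subsetI CollectI allI impI)
        fix x z assume xA: "x \<in> A" and p0: "poly (pderiv (rand_poly n x)) z = 0"
        have n0: "0 < n" using n by simp
        have xsp: "x \<in> space P" using xA by (simp add: A_def)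
        have xS: "\<And>j. j < n \<Longrightarrow> x j \<in> S" using xA xsp by (auto simp: A_def B0_def)
        have xR: "\<And>y. y \<in> F \<Longrightarrow> \<bar>(\<Sum>j<n. fR y (x j)) / real n - integral\<^sup>L \<mu> (fR y)\<bar> < t"
          using xA xsp by (auto simp: A_def BR_def not_le)
        have xI: "\<And>y. y \<in> F \<Longrightarrow> \<bar>(\<Sum>j<n. fI y (x j)) / real n - integral\<^sup>L \<mu> (fI y)\<bar> < t"
          using xA xsp by (auto simp: A_def BI_def not_le)
        define s where "s = (\<Sum>j<n. 1/(z - x j))"
        have key: "False" if zx: "\<And>j. j < n \<Longrightarrow> z \<noteq> x j" and s0: "s \<noteq> 0"
        proof -
          have "poly (pderiv (rand_poly n x)) z = poly (rand_poly n x) z * s"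
            unfolding s_def by (rule pderiv_rand_poly) (use zx in auto)
          moreover have "poly (rand_poly n x) z = (\<Prod>j<n. z - x j)"
            by (simp add: rand_poly_def poly_prod)
          moreover have "(\<Prod>j<n. z - x j) \<noteq> 0" using zx by auto
          ultimately show False using p0 s0 by simp
        qed
        show "z \<in> nbhd_N \<mu> \<epsilon>"
        proof (rule ccontr)
          assume "z \<notin> nbhd_N \<mu> \<epsilon>"
          hence ez: "\<epsilon> \<le> infdist z T" by (simp add: nbhd_N_def T_def S_def not_less)
          show False
          proof (cases "norm z \<le> R")
            case True
            hence zK: "z \<in> K" using ez by (simp add: K_def)
            have ezS: "\<epsilon> \<le> infdist z S" by (rule KS[OF zK])
            have zx: "\<And>j. j < n \<Longrightarrow> \<epsilon> \<le> dist z (x j)"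
              using infdist_le[OF xS, of _ z] ezS by (meson order.trans)
            obtain y where y: "y \<in> F" "dist y z < \<eta>" using F(3) zK by auto
            have yK: "y \<in> K" using y F by auto
            have eyS: "\<epsilon> \<le> infdist y S" by (rule KS[OF yK])
            have yx: "\<And>j. j < n \<Longrightarrow> \<epsilon> \<le> dist y (x j)"
              using infdist_le[OF xS, of _ y] eyS by (meson order.trans)
            define sy where "sy = (\<Sum>j<n. h y (x j)) / of_nat n"
            have hyx: "\<And>j. j < n \<Longrightarrow> h y (x j) = 1/(y - x j)" using xS by (simp add: h_def S_def)
            note hy = hF[OF y(1)]
            have ReI: "Re (cauchy_transform \<mu> y) = integral\<^sup>L \<mu> (fR y)"
            proof -
              have "fR y = (\<lambda>x. Re (h y x))" by (simp add: fR_def fun_eq_iff)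
              thus ?thesis using hy by simp
            qed
            have ImI: "Im (cauchy_transform \<mu> y) = integral\<^sup>L \<mu> (fI y)"
            proof -
              have "fI y = (\<lambda>x. Im (h y x))" by (simp add: fI_def fun_eq_iff)
              thus ?thesis using hy by simp
            qed
            have Resy: "Re sy = (\<Sum>j<n. fR y (x j)) / real n" by (simp add: sy_def fR_def Re_sum)
            have Imsy: "Im sy = (\<Sum>j<n. fI y (x j)) / real n" by (simp add: sy_def fI_def Im_sum)
            have n1: "norm (sy - cauchy_transform \<mu> y) < 2 * t"
            proof -
              have "\<bar>Re (sy - cauchy_transform \<mu> y)\<bar> < t" using xR[OF y(1)] Resy ReI by simp
              moreover have "\<bar>Im (sy - cauchy_transform \<mu> y)\<bar> < t" using xI[OF y(1)] Imsy ImI by simp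
              ultimately show ?thesis using cmod_le[of "sy - cauchy_transform \<mu> y"] by linarith
            qed
            have n2: "norm (s / of_nat n - sy) \<le> \<eta> / \<epsilon>\<^sup>2"
            proof -
              have "s / of_nat n - sy = (\<Sum>j<n. 1/(z - x j) - 1/(y - x j)) / of_nat n"
                by (simp add: s_def sy_def hyx sum_subtractf diff_divide_distrib)
              also have "norm \<dots> = norm (\<Sum>j<n. 1/(z - x j) - 1/(y - x j)) / real n"
                by (simp add: norm_divide)
              also have "\<dots> \<le> (\<Sum>j<n. dist z y / \<epsilon>\<^sup>2) / real n"
              proof (intro divide_right_mono order.trans[OF norm_sum] sum_mono)
                fix j assume "j \<in> {..<n}"
                thus "norm (1/(z - x j) - 1/(y - x j)) \<le> dist z y / \<epsilon>\<^sup>2"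
                  using pt_bound[OF \<epsilon> zx yx] by simp
              qed simp
              also have "\<dots> = dist z y / \<epsilon>\<^sup>2" using n0 by simp
              also have "\<dots> \<le> \<eta> / \<epsilon>\<^sup>2" using y(2) \<epsilon> by (intro divide_right_mono) (auto simp: dist_commute)
              finally show ?thesis .
            qed
            have n3: "norm (cauchy_transform \<mu> y - cauchy_transform \<mu> z) \<le> \<eta> / \<epsilon>\<^sup>2"
            proof -
              have "norm (cauchy_transform \<mu> y - cauchy_transform \<mu> z) \<le> dist y z / \<epsilon>\<^sup>2"
                using ct_lip[OF pr se \<epsilon>] eyS ezS unfolding S_def by blast
              also have "\<dots> \<le> \<eta> / \<epsilon>\<^sup>2" using y(2) \<epsilon> by (intro divide_right_mono) auto
              finally show ?thesis .
            qed
            have eta_eq: "\<eta> / \<epsilon>\<^sup>2 = \<delta> / 4" using \<epsilon> by (simp add: \<eta>_def)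
            have "norm (s / of_nat n - cauchy_transform \<mu> z) \<le>
                  norm (s / of_nat n - sy) + norm (sy - cauchy_transform \<mu> y) + norm (cauchy_transform \<mu> y - cauchy_transform \<mu> z)"
            proof -
              have e: "s / of_nat n - cauchy_transform \<mu> z = (s / of_nat n - sy) + (sy - cauchy_transform \<mu> y) + (cauchy_transform \<mu> y - cauchy_transform \<mu> z)"
                by simp
              show ?thesis unfolding e by (rule tri3)
            qed
            also have "\<dots> < \<delta>" using n1 n2 n3 eta_eq \<delta>(1) unfolding t_def by linarith
            also have "\<delta> \<le> norm (cauchy_transform \<mu> z)" by (rule \<delta>(2)[OF zK])
            finally have "s / of_nat n \<noteq> 0" using n0 by auto
            hence "s \<noteq> 0" by auto
            moreover have "\<And>j. j < n \<Longrightarrow> z \<noteq> x j" using zx \<epsilon> by fastforce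
            ultimately show False using key by blast
          next
            case False
            have xz: "\<And>j. j < n \<Longrightarrow> norm (x j) < norm z"
              using B(2) xS False by (fastforce simp: R_def)
            hence zx: "\<And>j. j < n \<Longrightarrow> z \<noteq> x j" by fastforce
            have "Re (z * s) = (\<Sum>j<n. Re (z / (z - x j)))" by (simp add: s_def sum_distrib_left Re_sum)
            also have "\<dots> > 0" using n0 by (intro sum_pos re_pos xz) auto
            finally have "s \<noteq> 0" by auto
            thus False using key zx by blast
          qed
        qed
      qed
    qed
  qed
  show "\<exists>C>0. \<exists>c>0. \<forall>n\<ge>1.
     \<exists>A \<in> sets (PiM {..<n} (\<lambda>_. \<mu>)).
        A \<subseteq> {x. \<forall>z. poly (pderiv (rand_poly n x)) z = 0 \<longrightarrow> z \<in> nbhd_N \<mu> \<epsilon>} \<and>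
        measure (PiM {..<n} (\<lambda>_. \<mu>)) A \<ge> 1 - C * exp (- c * real n)"
    using main C c by blast
qed


end
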